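(* Let $\Gamma=(V,E,\ell)$ be a connected finite labeled simplicial graph with all labels even whose Artin group is of FC-type, $\mathbb{K}$ a field of characteristic $0$, and $\chi:A_\Gamma\to\mathbb{Z}$ a surjective non-resonant homomorphism. Then for every $d\in\mathbb{T}_\Gamma$ and every edge $e\in E$, $\operatorname{mult}_d(\mathbf{p}_e\mathbf{q}_e)\le 2$.
   Context: $\Gamma$ has labels $\ell(e)=2\tilde\ell(e)$, $\tilde\ell(e)\ge1$; $A_\Gamma=\langle g_v\ (v\in V)\mid (g_vg_w)^{\tilde\ell(e)}=(g_wg_v)^{\tilde\ell(e)},\ e=\{v,w\}\in E\rangle$; FC-type means that for every clique $X$ the Coxeter group on $g_v$ ($v\in X$) with $g_v^2=1$, $(g_vg_w)^{\ell(\{v,w\})}=1$ is finite. $m_v=\chi(g_v)$, $m_e=m_v+m_w$ for $e=\{v,w\}$; non-resonant means $m_v\ne0$ for all $v$. For $e=\{v,w\}\in E$: $\mathbf{p}_e=(t^{m_v}-1)(t^{m_w}-1)$ and $\mathbf{q}_e=q_{\tilde\ell(e)}(t^{m_e})$ with $q_n(x)=(x^n-1)/(x-1)$. For $f\in\mathbb{K}[t^{\pm1}]$, $\operatorname{mult}_d(f)$ is the largest $m$ with $\Phi_d(t)^m\mid f$, $\Phi_d$ the $d$-th cyclotomic polynomial. $\mathbb{T}_\Gamma=\{d\in\mathbb{Z}_{>1}: d\mid m_v\text{ for some }v\}\cup\{d\in\mathbb{Z}_{>1}: d\mid\tilde\ell(e)m_e,\ d\nmid m_e\text{ for some }e\in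 E\}$. *)

theory Defs
  imports "HOL-Computational_Algebra.Polynomial"
begin

text \<open>Standard recursive definition: t^n - 1 = product of Phi_d over d dividing n.\<close>
function cyclotomic :: "nat \<Rightarrow> 'a::field_char_0 poly" where
  "cyclotomic n = (if n = 0 then 1 else
     (monom 1 n - 1) div (\<Prod>d\<in>{d. d dvd n \<and> d < n}. cyclotomic d))"
  by auto
termination
  by (relation "measure id") auto

declare cyclotomic.simps[simp del]

text \<open>A pair (k, g) represents the Laurent polynomial t^k * g(t).\<close>
type_synonym 'a lpoly = "int \<times> 'a poly"

definition lp_eq :: "'a::field lpoly \<Rightarrow> 'a lpoly \<Rightarrow> bool" where
  "lp_eq a b = (case a of (k, g) \<Rightarrow> case b of (j, h) \<Rightarrow>
     monom 1 (nat (k - min k j)) * g = monom 1 (nat (j - min k j)) * h)"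

definition lp_mult :: "'a::field lpoly \<Rightarrow> 'a lpoly \<Rightarrow> 'a lpoly" where
  "lp_mult a b = (case a of (k, g) \<Rightarrow> case b of (j, h) \<Rightarrow> (k + j, g * h))"

definition lp_add :: "'a::field lpoly \<Rightarrow> 'a lpoly \<Rightarrow> 'a lpoly" where
  "lp_add a b = (case a of (k, g) \<Rightarrow> case b of (j, h) \<Rightarrow>
     (min k j, monom 1 (nat (k - min k j)) * g + monom 1 (nat (j - min k j)) * h))"

definition lp_sum :: "'a::field lpoly list \<Rightarrow> 'a lpoly" where
  "lp_sum xs = foldr lp_add xs (0, 0)"

definition lp_mon :: "int \<Rightarrow> 'a::field lpoly" where
  "lp_mon m = (m, 1)"

definition lp_const :: "'a::field \<Rightarrow> 'a lpoly" where
  "lp_const c = (0, [:c:])"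

definition lp_dvd :: "'a::field lpoly \<Rightarrow> 'a lpoly \<Rightarrow> bool" where
  "lp_dvd a b = (\<exists>c. lp_eq (lp_mult a c) b)"

definition mult_cyc :: "nat \<Rightarrow> 'a::field_char_0 lpoly \<Rightarrow> nat" where
  "mult_cyc d f = Max {m. lp_dvd (0, cyclotomic d ^ m) f}"

definition tpow_minus_one :: "int \<Rightarrow> 'a::field lpoly" where
  "tpow_minus_one m = lp_add (lp_mon m) (lp_const (-1))"

text \<open>q_n(t^m) = sum_{i<n} (t^m)^i = (x^n - 1)/(x - 1) at x = t^m\<close>
definition q_at :: "nat \<Rightarrow> int \<Rightarrow> 'a::field lpoly" where
  "q_at n m = lp_sum (map (\<lambda>i. lp_mon (int i * m)) [0..<n])"

definition simplicial_graph :: "'v set \<Rightarrow> 'v set set \<Rightarrow> bool" where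
  "simplicial_graph V E = (finite V \<and> (\<forall>e\<in>E. e \<subseteq> V \<and> card e = 2))"

definition graph_connected :: "'v set \<Rightarrow> 'v set set \<Rightarrow> bool" where
  "graph_connected V E =
     (\<forall>v\<in>V. \<forall>w\<in>V. (v, w) \<in> {(a, b). {a, b} \<in> E}\<^sup>*)"

definition is_clique :: "'v set \<Rightarrow> 'v set set \<Rightarrow> 'v set \<Rightarrow> bool" where
  "is_clique V E X = (X \<subseteq> V \<and> (\<forall>v\<in>X. \<forall>w\<in>X. v \<noteq> w \<longrightarrow> {v, w} \<in> E))"

text \<open>Relators of the Coxeter group on the generators g_v (v in X):
  g_v^2 and (g_v g_w)^(l e) with l e = 2 * lt e, for edges e = {v,w} inside X.\<close>
definition cox_relators :: "'v set set \<Rightarrow> ('v set \<Rightarrow> nat) \<Rightarrow> 'v set \<Rightarrow> 'v list set" where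
  "cox_relators E lt X =
     {[s, s] | s. s \<in> X} \<union>
     {concat (replicate (2 * lt {s, t}) [s, t]) | s t. s \<in> X \<and> t \<in> X \<and> s \<noteq> t \<and> {s, t} \<in> E}"

text \<open>Since all generators are involutions,
  the Coxeter group is the monoid presented on words over X modulo relators = 1,
  i.e. words modulo the equivalence generated by these moves.\<close>
definition cox_step :: "'v set set \<Rightarrow> ('v set \<Rightarrow> nat) \<Rightarrow> 'v set \<Rightarrow> ('v list \<times> 'v list) set" where
  "cox_step E lt X =
     {(u @ r @ w, u @ w) | u r w. u \<in> lists X \<and> w \<in> lists X \<and> r \<in> cox_relators E lt X}"

definition cox_equiv :: "'v set set \<Rightarrow> ('v set \<Rightarrow> nat) \<Rightarrow> 'v set \<Rightarrow> ('v list \<times> 'v list) set" where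
  "cox_equiv E lt X = (cox_step E lt X \<union> (cox_step E lt X)\<inverse>)\<^sup>*"

definition coxeter_finite :: "'v set set \<Rightarrow> ('v set \<Rightarrow> nat) \<Rightarrow> 'v set \<Rightarrow> bool" where
  "coxeter_finite E lt X = finite (lists X // cox_equiv E lt X)"

definition FC_type :: "'v set \<Rightarrow> 'v set set \<Rightarrow> ('v set \<Rightarrow> nat) \<Rightarrow> bool" where
  "FC_type V E lt = (\<forall>X. is_clique V E X \<longrightarrow> coxeter_finite E lt X)"

text \<open>Elements of A_Gamma are represented by words in the g_v^{+-1}; (v, True) stands for
  g_v^{-1}. A homomorphism chi : A_Gamma -> Z is determined by m v = chi(g_v), and every
  m : V -> Z defines one (the Artin relations hold in the abelian group Z).\<close>
definition chi_word :: "('v \<Rightarrow> int) \<Rightarrow> ('v \<times> bool) list \<Rightarrow> int" where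
  "chi_word m w = sum_list (map (\<lambda>(v, inv). if inv then - m v else m v) w)"

definition chi_surjective :: "'v set \<Rightarrow> ('v \<Rightarrow> int) \<Rightarrow> bool" where
  "chi_surjective V m = (\<forall>k::int. \<exists>w \<in> lists (V \<times> UNIV). chi_word m w = k)"

definition edge_m :: "('v \<Rightarrow> int) \<Rightarrow> 'v set \<Rightarrow> int" where
  "edge_m m e = (\<Sum>v\<in>e. m v)"

definition T_Gamma :: "'v set \<Rightarrow> 'v set set \<Rightarrow> ('v set \<Rightarrow> nat) \<Rightarrow> ('v \<Rightarrow> int) \<Rightarrow> nat set" where
  "T_Gamma V E lt m =
     {d. d > 1 \<and> (\<exists>v\<in>V. int d dvd m v)} \<union>
     {d. d > 1 \<and> (\<exists>e\<in>E. int d dvd int (lt e) * edge_m m e \<and> \<not> int d dvd edge_m m e)}"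

end

theory Submission
  imports Defs "HOL-Computational_Algebra.Polynomial_Factorial" "HOL-Number_Theory.Totient"
begin

definition xm1 :: "nat \<Rightarrow> 'a::field poly" where "xm1 n = monom 1 n - 1"

lemma xm1_dvd_mult: "xm1 n dvd (xm1 (q*n) :: 'a::field poly)"
proof (induction q)
  case 0 then show ?case by (simp add: xm1_def)
next
  case (Suc q)
  have "xm1 (Suc q * n) = monom 1 n * xm1 (q*n) + (xm1 n :: 'a poly)"
    by (simp add: xm1_def mult_monom algebra_simps)
  then show ?case using Suc by simp
qed


lemma ring_aux1: "(A::'a::comm_ring_1) * B - 1 = A * (B - 1) + (A - 1)"
  by (simp add: algebra_simps)

lemma dvd_xm1_mod:
  assumes "p dvd xm1 a" "p dvd xm1 b" shows "p dvd (xm1 (a mod b) :: 'a::field poly)"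
proof -
  have m: "monom (1::'a) a = monom 1 (a mod b) * monom 1 ((a div b) * b)"
    by (simp only: mult_monom mult_1 mod_div_mult_eq)
  have e: "xm1 a = monom 1 (a mod b) * xm1 ((a div b) * b) + (xm1 (a mod b) :: 'a poly)"
    unfolding xm1_def m by (rule ring_aux1)
  have "p dvd xm1 ((a div b) * b)" by (rule dvd_trans[OF assms(2) xm1_dvd_mult])
  then have "p dvd monom 1 (a mod b) * xm1 ((a div b) * b)" by (rule dvd_mult)
  then have "p dvd monom 1 (a mod b) * xm1 ((a div b) * b) + xm1 (a mod b) \<longleftrightarrow> p dvd xm1 (a mod b)"
    by (rule dvd_add_right_iff)
  with assms(1) e show ?thesis by simp
qed

lemma dvd_xm1_gcd:
  "p dvd xm1 a \<Longrightarrow> p dvd xm1 b \<Longrightarrow> p dvd (xm1 (gcd a b) :: 'a::field poly)"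
proof (induction a b rule: gcd_nat_induct)
  case (step m n)
  then show ?case using dvd_xm1_mod[of p m n] gcd_red_nat[of m n] by simp
qed simp


lemma prime_not_dvd_X:
  assumes "prime_elem (p :: 'a::field poly)" "p dvd xm1 n" "n > 0"
  shows "\<not> p dvd monom 1 k"
proof
  assume "p dvd monom 1 k"
  then have "p dvd [:0,1:] ^ k" by (simp only: monom_altdef smult_1_left)
  then have "p dvd [:0,1:]" using assms(1) prime_elem_dvd_power by blast
  moreover have "[:0,1:] dvd ([:0,1:] ^ n :: 'a poly)" using assms(3) by (simp add: dvd_power)
  ultimately have "p dvd [:0,1:] ^ n" by (rule dvd_trans)
  then have "p dvd monom 1 n" by (simp only: monom_altdef smult_1_left)
  then have "p dvd monom 1 n - xm1 n" using assms(2) by (rule dvd_diff)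
  then have "p dvd 1" by (simp add: xm1_def)
  with assms(1) show False by (simp add: prime_elem_not_unit)
qed

lemma xm1_squarefree:
  assumes "prime_elem (p :: 'a::field_char_0 poly)" "n > 0"
  shows "\<not> p * p dvd xm1 n"
proof
  assume "p * p dvd xm1 n"
  then obtain h where "xm1 n = p * p * h" by (rule dvdE)
  then have h: "xm1 n = p * (p * h)" by (simp only: mult.assoc)
  have "pderiv (xm1 n) = p * pderiv (p * h) + (p * h) * pderiv p"
    unfolding h by (rule pderiv_mult)
  then have "p dvd pderiv (xm1 n)" by simp
  moreover have "pderiv (xm1 n :: 'a poly) = smult (of_nat n) (monom 1 (n - 1))"
    by (simp add: xm1_def pderiv_diff pderiv_monom smult_monom)
  ultimately have "p dvd smult (of_nat n) (monom 1 (n - 1))" by simp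
  then have "p dvd monom 1 (n - 1)" using assms(2) by (simp add: dvd_smult_iff)
  moreover have "p dvd xm1 n" unfolding h by simp
  ultimately show False using prime_not_dvd_X[OF assms(1) _ assms(2)] by blast
qed


lemma xm1_nz: "n > 0 \<Longrightarrow> xm1 n \<noteq> (0 :: 'a::field poly)"
proof
  assume "n > 0" "xm1 n = (0 :: 'a poly)"
  then have "coeff (xm1 n :: 'a poly) n = 0" by simp
  moreover have "coeff (xm1 n :: 'a poly) n = 1" using \<open>n > 0\<close> by (simp add: xm1_def coeff_monom)
  ultimately show False by simp
qed

definition Qp :: "nat \<Rightarrow> nat \<Rightarrow> 'a::field poly" where
  "Qp n k = (\<Sum>i<n. monom 1 (i * k))"

lemma ring_aux2: "((Q::'a::comm_ring_1) + M) * (K - 1) = (M * K - 1) + (Q * (K - 1) - (M - 1))"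
  by (simp add: algebra_simps)

lemma Qp_mult: "Qp n k * xm1 k = (xm1 (n * k) :: 'a::field poly)"
proof (induction n)
  case 0 then show ?case by (simp add: Qp_def xm1_def)
next
  case (Suc n)
  have "Qp (Suc n) k = Qp n k + (monom 1 (n * k) :: 'a poly)" by (simp add: Qp_def)
  then have "Qp (Suc n) k * xm1 k = (monom 1 (n * k) * monom 1 k - 1) + (Qp n k * xm1 k - xm1 (n * k) :: 'a poly)"
    unfolding xm1_def by (simp only: ring_aux2)
  also have "\<dots> = monom 1 (n * k) * monom 1 k - 1" using Suc.IH by simp
  also have "\<dots> = xm1 (Suc n * k)" unfolding xm1_def by (simp only: mult_monom mult_1 mult_Suc add.commute)
  finally show ?case .
qed

lemma Qp_0: "Qp n 0 = ([:of_nat n:] :: 'a::field poly)"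
  by (simp add: Qp_def of_nat_poly)


context begin

interpretation fp:
  normalization_euclidean_semiring_multiplicative where zero = "0 :: 'a :: field poly"
    and one = 1 and plus = plus and minus = minus
    and times = times
    and normalize = "\<lambda>p. smult (inverse (lead_coeff p)) p"
    and unit_factor = "\<lambda>p. [:lead_coeff p:]"
    and euclidean_size = "\<lambda>p. if p = 0 then 0 else 2 ^ degree p"
    and divide = divide and modulo = modulo
  rewrites "dvd.dvd (times :: 'a poly \<Rightarrow> _) = Rings.dvd"
    and "comm_monoid_mult.prod_mset times 1 = prod_mset"
    and "comm_semiring_1.irreducible times 1 0 = irreducible"
    and "comm_semiring_1.prime_elem times 1 0 = prime_elem"
    and "power.power (1 :: 'a poly) times = (^)"
proof -
  show "power.power (1 :: 'a poly) times = (^)"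
  proof (intro ext)
    fix p :: "'a poly" and n :: nat
    show "power.power 1 (*) p n = p ^ n" by (induction n) (simp_all add: power.power.simps)
  qed
  show "dvd.dvd (times :: 'a poly \<Rightarrow> _) = Rings.dvd"
    by (simp add: dvd_dict)
  show "comm_monoid_mult.prod_mset times 1 = prod_mset"
    by (simp add: prod_mset_dict)
  show "comm_semiring_1.irreducible times 1 0 = irreducible"
    by (simp add: irreducible_dict)
  show "comm_semiring_1.prime_elem times 1 0 = prime_elem"
    by (simp add: prime_elem_dict)
  show "class.normalization_euclidean_semiring_multiplicative divide plus minus (0 :: 'a poly) times 1
    modulo (\<lambda>p. if p = 0 then 0 else 2 ^ degree p)
    (\<lambda>p. [:lead_coeff p:]) (\<lambda>p. smult (inverse (lead_coeff p)) p)"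
  proof (standard, fold dvd_dict)
    fix p :: "'a poly"
    show "[:lead_coeff p:] * smult (inverse (lead_coeff p)) p = p"
      by (cases "p = 0") simp_all
  next
    fix p :: "'a poly" assume "is_unit p"
    then show "[:lead_coeff p:] = p"
      by (elim is_unit_polyE) (auto simp: monom_0 one_poly_def field_simps)
  next
    fix p :: "'a poly" assume "p \<noteq> 0"
    then show "is_unit [:lead_coeff p:]"
      by (simp add: is_unit_pCons_iff)
  next
    fix a b :: "'a poly" assume "is_unit a"
    thus "[:lead_coeff (a * b):] = a * [:lead_coeff b:]"
      by (auto elim!: is_unit_polyE)
  qed (auto simp: lead_coeff_mult Rings.div_mult_mod_eq intro!: degree_mod_less' degree_mult_right_le)
qed

lemma poly_prime_divisor:
  assumes "(a::'a::field poly) \<noteq> 0" "\<not> is_unit a"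
  shows "\<exists>p. prime_elem p \<and> p dvd a"
  using fp.prime_divisor_exists[OF assms] fp.prime_imp_prime_elem by blast

lemma poly_dvd_mult_noprime:
  fixes A B Y :: "'a::field poly"
  assumes "A dvd Y" "B dvd Y" "Y \<noteq> 0"
    and np: "\<And>p. prime_elem p \<Longrightarrow> p dvd A \<Longrightarrow> p dvd B \<Longrightarrow> False"
  shows "A * B dvd Y"
proof (rule fp.multiplicity_le_imp_dvd)
  have "A \<noteq> 0" using assms(1,3) by (cases "A = 0") simp_all
  have "B \<noteq> 0" using assms(2,3) by (cases "B = 0") simp_all
  show "A * B \<noteq> 0" using \<open>A \<noteq> 0\<close> \<open>B \<noteq> 0\<close> by simp
  fix p :: "'a poly" assume "fp.prime p"
  then have pe: "prime_elem p" by (rule fp.prime_imp_prime_elem)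
  have "fp.multiplicity p (A * B) = fp.multiplicity p A + fp.multiplicity p B"
    by (rule fp.prime_elem_multiplicity_mult_distrib[OF pe \<open>A \<noteq> 0\<close> \<open>B \<noteq> 0\<close>])
  moreover have "fp.multiplicity p A \<le> fp.multiplicity p Y"
    by (rule fp.dvd_imp_multiplicity_le[OF assms(1) assms(3)])
  moreover have "fp.multiplicity p B \<le> fp.multiplicity p Y"
    by (rule fp.dvd_imp_multiplicity_le[OF assms(2) assms(3)])
  moreover have "fp.multiplicity p A = 0 \<or> fp.multiplicity p B = 0"
  proof (cases "p dvd A")
    case True
    then have "\<not> p dvd B" using np[OF pe] by blast
    then show ?thesis by (simp add: fp.not_dvd_imp_multiplicity_0)
  next
    case False
    then show ?thesis by (simp add: fp.not_dvd_imp_multiplicity_0)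
  qed
  ultimately show "fp.multiplicity p (A * B) \<le> fp.multiplicity p Y" by linarith
qed


lemma mult_le1:
  fixes p :: "'a::field_char_0 poly"
  assumes "prime_elem p" "n > 0"
  shows "fp.multiplicity p (xm1 n) \<le> 1"
proof (rule ccontr)
  assume "\<not> ?thesis"
  then have "2 \<le> fp.multiplicity p (xm1 n)" by simp
  then have "p ^ 2 dvd xm1 n" by (rule fp.multiplicity_dvd')
  then have "p * p dvd xm1 n" by (simp add: power2_eq_square)
  with xm1_squarefree[OF assms] show False by blast
qed

lemma count_lemma:
  fixes p :: "'a::field_char_0 poly"
  assumes pe: "prime_elem p"
    and hx: "\<And>k. k > 0 \<Longrightarrow> p dvd xm1 k \<longleftrightarrow> d dvd k"
    and ht: "\<not> p dvd monom 1 t"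
    and a: "a > 0" and b: "b > 0" and n: "n > 0"
    and hk: "d dvd a \<Longrightarrow> d dvd b \<Longrightarrow> d dvd k"
  shows "\<not> p ^ 3 dvd monom 1 t * xm1 a * xm1 b * Qp n k"
proof
  assume dv: "p ^ 3 dvd monom 1 t * xm1 a * xm1 b * Qp n k"
  have nu: "\<not> is_unit p" using pe by (simp add: prime_elem_not_unit)
  have z1: "monom 1 t \<noteq> (0::'a poly)" by simp
  have za: "xm1 a \<noteq> (0::'a poly)" using a by (rule xm1_nz)
  have zb: "xm1 b \<noteq> (0::'a poly)" using b by (rule xm1_nz)
  have Mq: "fp.multiplicity p (Qp n k) \<le> 1 \<and> (d dvd a \<and> d dvd b \<longrightarrow> fp.multiplicity p (Qp n k) = 0)
     \<and> Qp n k \<noteq> (0 :: 'a poly)"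
  proof (cases "k = 0")
    case True
    have "is_unit (Qp n k :: 'a poly)" using True n by (simp add: Qp_0 is_unit_const_poly_iff dvd_field_iff)
    then have "Qp n k \<noteq> (0 :: 'a poly)" by auto
    then show ?thesis using True \<open>is_unit (Qp n k :: 'a poly)\<close> by (simp add: fp.multiplicity_unit_right)
  next
    case False
    have e: "Qp n k * xm1 k = (xm1 (n * k) :: 'a poly)" by (rule Qp_mult)
    have nk: "n * k > 0" using False n by simp
    have zk: "xm1 k \<noteq> (0::'a poly)" using False by (intro xm1_nz) simp
    have znk: "xm1 (n * k) \<noteq> (0::'a poly)" using nk by (rule xm1_nz)
    have zq: "Qp n k \<noteq> (0 :: 'a poly)" using e znk by auto
    have s: "fp.multiplicity p (Qp n k) + fp.multiplicity p (xm1 k) = fp.multiplicity p (xm1 (n * k))"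
      using fp.prime_elem_multiplicity_mult_distrib[OF pe zq zk] e by simp
    have l: "fp.multiplicity p (xm1 (n * k)) \<le> 1" using pe nk by (rule mult_le1)
    have "d dvd a \<and> d dvd b \<longrightarrow> fp.multiplicity p (xm1 k) \<ge> 1"
    proof
      assume "d dvd a \<and> d dvd b"
      then have "p dvd xm1 k" using hk hx[of k] False by simp
      then have "p ^ 1 dvd xm1 k" by simp
      then show "fp.multiplicity p (xm1 k) \<ge> 1" by (rule fp.multiplicity_geI[OF zk nu])
    qed
    then show ?thesis using s l zq by auto
  qed
  have ma: "fp.multiplicity p (xm1 a) \<le> 1" using pe a by (rule mult_le1)
  have mb: "fp.multiplicity p (xm1 b) \<le> 1" using pe b by (rule mult_le1)
  have ma0: "\<not> d dvd a \<Longrightarrow> fp.multiplicity p (xm1 a) = 0"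
    using hx[OF a] by (simp add: fp.not_dvd_imp_multiplicity_0)
  have mb0: "\<not> d dvd b \<Longrightarrow> fp.multiplicity p (xm1 b) = 0"
    using hx[OF b] by (simp add: fp.not_dvd_imp_multiplicity_0)
  have m1: "fp.multiplicity p (monom 1 t) = 0" using ht by (rule fp.not_dvd_imp_multiplicity_0)
  have zq: "Qp n k \<noteq> (0 :: 'a poly)" using Mq by blast
  have "fp.multiplicity p (monom 1 t * xm1 a * xm1 b * Qp n k)
      = fp.multiplicity p (monom 1 t) + fp.multiplicity p (xm1 a) + fp.multiplicity p (xm1 b)
        + fp.multiplicity p (Qp n k)"
    using z1 za zb zq by (simp add: fp.prime_elem_multiplicity_mult_distrib[OF pe])
  also have "\<dots> \<le> 2" using Mq ma mb ma0 mb0 m1 by (cases "d dvd a \<and> d dvd b") auto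
  finally have le2: "fp.multiplicity p (monom 1 t * xm1 a * xm1 b * Qp n k) \<le> 2" .
  have "monom 1 t * xm1 a * xm1 b * Qp n k \<noteq> (0 :: 'a poly)" using z1 za zb zq by simp
  from fp.multiplicity_geI[OF this nu dv] le2 show False by simp
qed

end


lemma prime_dvd_prodE:
  assumes "prime_elem (p :: 'b::comm_semiring_1)" "finite F" "p dvd prod f F"
  shows "\<exists>y\<in>F. p dvd f y"
  using assms(2,3)
proof (induction F rule: finite_induct)
  case empty
  then show ?case using assms(1) by (simp add: prime_elem_not_unit)
next
  case (insert x F)
  then have "p dvd f x * prod f F" by simp
  then have "p dvd f x \<or> p dvd prod f F" using assms(1) prime_elem_dvd_mult_iff by blast
  then show ?case using insert.IH by blast
qed

lemma prod_dvd_noprime: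
  fixes f :: "'b \<Rightarrow> 'a::field poly"
  assumes "finite A" "Y \<noteq> 0" "\<And>x. x \<in> A \<Longrightarrow> f x dvd Y"
    and "\<And>x y p. x \<in> A \<Longrightarrow> y \<in> A \<Longrightarrow> x \<noteq> y \<Longrightarrow> prime_elem p \<Longrightarrow> p dvd f x \<Longrightarrow> p dvd f y \<Longrightarrow> False"
  shows "prod f A dvd Y"
  using assms
proof (induction A rule: finite_induct)
  case empty
  then show ?case by simp
next
  case (insert x F)
  have "f x * prod f F dvd Y"
  proof (rule poly_dvd_mult_noprime)
    show "f x dvd Y" using insert.prems(2) by simp
    show "prod f F dvd Y"
      by (rule insert.IH) (use insert.prems in auto)
    show "Y \<noteq> 0" by (rule insert.prems(1))
    fix p :: "'a poly" assume p: "prime_elem p" "p dvd f x" "p dvd prod f F"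
    then obtain y where y: "y \<in> F" "p dvd f y" using prime_dvd_prodE[OF p(1) insert.hyps(1)] by blast
    have "x \<noteq> y" using y(1) insert.hyps(2) by blast
    show False by (rule insert.prems(3)[of x y p]) (use y p \<open>x \<noteq> y\<close> in auto)
  qed
  then show ?case using insert.hyps by simp
qed

lemma divisors_split:
  assumes "(n::nat) > 0"
  shows "{e. e dvd n} = insert n {e. e dvd n \<and> e < n}" "n \<notin> {e. e dvd n \<and> e < n}"
    "finite {e. e dvd n \<and> e < n}"
proof -
  show "{e. e dvd n} = insert n {e. e dvd n \<and> e < n}"
    using assms by (auto dest: dvd_imp_le)
  show "n \<notin> {e. e dvd n \<and> e < n}" by simp
  show "finite {e. e dvd n \<and> e < n}" by (rule finite_subset[OF _ finite_divisors_nat[OF assms]]) auto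
qed

lemma prod_divisors_split:
  assumes "(n::nat) > 0"
  shows "(\<Prod>e\<in>{e. e dvd n}. f e) = f n * (\<Prod>e\<in>{e. e dvd n \<and> e < n}. (f e :: 'b::comm_monoid_mult))"
  using divisors_split[OF assms] by simp

lemma sum_divisors_split:
  assumes "(n::nat) > 0"
  shows "(\<Sum>e\<in>{e. e dvd n}. f e) = f n + (\<Sum>e\<in>{e. e dvd n \<and> e < n}. (f e :: 'b::comm_monoid_add))"
  using divisors_split[OF assms] by simp

lemma key_contra:
  fixes p :: "'a::field_char_0 poly"
  assumes "e > 0" "g > 0" "g dvd e" "g < e"
    and pe: "(\<Prod>f\<in>{f. f dvd e}. cyclotomic f) = (xm1 e :: 'a poly)"
    and pg: "(\<Prod>f\<in>{f. f dvd g}. cyclotomic f) = (xm1 g :: 'a poly)"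
    and p: "prime_elem p" "p dvd cyclotomic e" "p dvd xm1 g"
  shows False
proof -
  have "{f. f dvd g} \<subseteq> {f. f dvd e \<and> f < e}"
    using assms(2,3,4) by (auto dest: dvd_imp_le intro: dvd_trans)
  then have "(\<Prod>f\<in>{f. f dvd g}. cyclotomic f) dvd (\<Prod>f\<in>{f. f dvd e \<and> f < e}. (cyclotomic f :: 'a poly))"
    by (rule prod_dvd_prod_subset[OF divisors_split(3)[OF assms(1)]])
  then have "xm1 g dvd (\<Prod>f\<in>{f. f dvd e \<and> f < e}. (cyclotomic f :: 'a poly))" using pg by simp
  then have "p dvd (\<Prod>f\<in>{f. f dvd e \<and> f < e}. (cyclotomic f :: 'a poly))" using p(3) dvd_trans by blast
  then have "p * p dvd cyclotomic e * (\<Prod>f\<in>{f. f dvd e \<and> f < e}. (cyclotomic f :: 'a poly))"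
    using p(2) by (simp add: mult_dvd_mono)
  moreover have "xm1 e = cyclotomic e * (\<Prod>f\<in>{f. f dvd e \<and> f < e}. (cyclotomic f :: 'a poly))"
    using pe prod_divisors_split[OF assms(1), of "cyclotomic :: nat \<Rightarrow> 'a poly"] by simp
  ultimately have "p * p dvd xm1 e" by simp
  with xm1_squarefree[OF p(1) assms(1)] show False by blast
qed

lemma cyc_main:
  "n > 0 \<Longrightarrow> (\<Prod>e\<in>{e. e dvd n}. cyclotomic e) = (xm1 n :: 'a::field_char_0 poly)"
proof (induction n rule: less_induct)
  case (less n)
  define P where "P = {e. e dvd n \<and> e < n}"
  have IH: "\<And>k. k dvd n \<Longrightarrow> k < n \<Longrightarrow> (\<Prod>e\<in>{e. e dvd k}. cyclotomic e) = (xm1 k :: 'a poly)"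
    using less.IH less.prems by (metis dvd_0_right gr0I dvd_0_left_iff less_irrefl_nat)
  have cdvd: "cyclotomic k dvd (xm1 k :: 'a poly)" if "k dvd n" "k < n" for k
  proof -
    have "k > 0" using that less.prems by (cases "k = 0") auto
    have "cyclotomic k dvd (\<Prod>e\<in>{e. e dvd k}. (cyclotomic e :: 'a poly))"
      by (rule dvd_prodI) (use \<open>k > 0\<close> in auto)
    then show ?thesis using IH[OF that] by simp
  qed
  have D: "(\<Prod>e\<in>P. cyclotomic e) dvd (xm1 n :: 'a poly)"
  proof (rule prod_dvd_noprime)
    show "finite P" unfolding P_def by (rule divisors_split(3)[OF less.prems])
    show "xm1 n \<noteq> (0 :: 'a poly)" by (rule xm1_nz[OF less.prems])
    fix x assume "x \<in> P"
    then have x: "x dvd n" "x < n" by (auto simp: P_def)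
    have "xm1 x dvd (xm1 ((n div x) * x) :: 'a poly)" by (rule xm1_dvd_mult)
    then have "xm1 x dvd (xm1 n :: 'a poly)" using x(1) by simp
    then show "cyclotomic x dvd (xm1 n :: 'a poly)" using cdvd[OF x] dvd_trans by blast
  next
    have gen: "False" if xy: "x \<in> P" "y \<in> P" "x < y" and p: "prime_elem p" "p dvd cyclotomic x" "p dvd (cyclotomic y :: 'a poly)" for x y p
    proof -
      have x: "x dvd n" "x < n" and y: "y dvd n" "y < n" using xy by (auto simp: P_def)
      have x0: "x > 0" using x less.prems by (cases "x = 0") auto
      have "p dvd xm1 x" using p(2) cdvd[OF x] dvd_trans by blast
      moreover have "p dvd xm1 y" using p(3) cdvd[OF y] dvd_trans by blast
      ultimately have pg: "p dvd xm1 (gcd x y)" by (rule dvd_xm1_gcd)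
      have g0: "gcd x y > 0" using x0 by simp
      have gd: "gcd x y dvd y" by simp
      have gl: "gcd x y < y" using gcd_le1_nat[of x y] x0 xy(3) by linarith
      have gn: "gcd x y dvd n" using gd y(1) dvd_trans by blast
      show False
        by (rule key_contra[OF _ g0 gd gl IH[OF y] IH[OF gn] p(1) p(3) pg])
           (use g0 gl y in auto)
    qed
    fix x y p assume "x \<in> P" "y \<in> P" "x \<noteq> y" "prime_elem p" "p dvd cyclotomic x" "p dvd (cyclotomic y :: 'a poly)"
    then show False using gen[of x y p] gen[of y x p] by (cases "x < y") auto
  qed
  have c: "cyclotomic n = (if n = 0 then 1 else
     (monom 1 n - 1) div (\<Prod>d\<in>{d. d dvd n \<and> d < n}. (cyclotomic d :: 'a poly)))"
    by (rule cyclotomic.simps)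
  have "cyclotomic n = xm1 n div (\<Prod>e\<in>P. (cyclotomic e :: 'a poly))"
    using less.prems unfolding c P_def xm1_def by simp
  then have "cyclotomic n * (\<Prod>e\<in>P. cyclotomic e) = (xm1 n :: 'a poly)"
    using D by simp
  then show ?case using prod_divisors_split[OF less.prems, of "cyclotomic :: nat \<Rightarrow> 'a poly"] unfolding P_def by simp
qed


lemma degree_xm1: "n > 0 \<Longrightarrow> degree (xm1 n :: 'a::field poly) = n"
proof -
  assume n: "n > 0"
  have "degree (xm1 n :: 'a poly) \<le> max (degree (monom (1::'a) n)) (degree (1::'a poly))"
    unfolding xm1_def by (rule degree_diff_le_max)
  then have "degree (xm1 n :: 'a poly) \<le> n" by (simp add: degree_monom_eq)
  moreover have "coeff (xm1 n :: 'a poly) n \<noteq> 0" using n by (simp add: xm1_def coeff_monom)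
  then have "n \<le> degree (xm1 n :: 'a poly)" by (rule le_degree)
  ultimately show ?thesis by simp
qed

lemma cyc_degree:
  "n > 0 \<Longrightarrow> degree (cyclotomic n :: 'a::field_char_0 poly) = totient n"
proof (induction n rule: less_induct)
  case (less n)
  define P where "P = {e. e dvd n \<and> e < n}"
  have cm: "(\<Prod>e\<in>{e. e dvd n}. cyclotomic e) = (xm1 n :: 'a poly)" by (rule cyc_main[OF less.prems])
  have nz: "\<forall>e\<in>{e. e dvd n}. (cyclotomic e :: 'a poly) \<noteq> 0"
  proof
    fix e assume "e \<in> {e. e dvd n}"
    then have "cyclotomic e dvd (\<Prod>e\<in>{e. e dvd n}. (cyclotomic e :: 'a poly))"
      by (intro dvd_prodI) (use less.prems in auto)
    then have "cyclotomic e dvd (xm1 n :: 'a poly)" using cm by simp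
    then show "(cyclotomic e :: 'a poly) \<noteq> 0" using xm1_nz[OF less.prems] by auto
  qed
  have dx: "degree (xm1 n :: 'a poly) = n" by (rule degree_xm1[OF less.prems])
  have "n = degree (\<Prod>e\<in>{e. e dvd n}. (cyclotomic e :: 'a poly))"
    using cm dx by simp
  also have "\<dots> = (\<Sum>e\<in>{e. e dvd n}. degree (cyclotomic e :: 'a poly))"
    by (rule degree_prod_eq_sum_degree[OF nz])
  also have "\<dots> = degree (cyclotomic n :: 'a poly) + (\<Sum>e\<in>P. degree (cyclotomic e :: 'a poly))"
    unfolding P_def by (rule sum_divisors_split[OF less.prems])
  also have "(\<Sum>e\<in>P. degree (cyclotomic e :: 'a poly)) = (\<Sum>e\<in>P. totient e)"
  proof (rule sum.cong)
    fix e assume "e \<in> P"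
    then have "e dvd n" "e < n" by (auto simp: P_def)
    moreover then have "e > 0" using less.prems by (cases "e = 0") auto
    ultimately show "degree (cyclotomic e :: 'a poly) = totient e" using less.IH by blast
  qed simp
  finally have a: "n = degree (cyclotomic n :: 'a poly) + (\<Sum>e\<in>P. totient e)" .
  have "n = (\<Sum>e\<in>{e. e dvd n}. totient e)" by (simp add: totient_divisor_sum)
  also have "\<dots> = totient n + (\<Sum>e\<in>P. totient e)"
    unfolding P_def by (rule sum_divisors_split[OF less.prems])
  finally show ?case using a by linarith
qed

lemma cyc_prime:
  assumes "d > (1::nat)"
  shows "\<exists>p::'a::field_char_0 poly. prime_elem p \<and> p dvd cyclotomic d \<and> p dvd xm1 d
           \<and> (\<forall>k>0. p dvd xm1 k \<longleftrightarrow> d dvd k)"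
proof -
  have d0: "d > 0" using assms by simp
  have pd: "(\<Prod>e\<in>{e. e dvd d}. cyclotomic e) = (xm1 d :: 'a poly)" by (rule cyc_main[OF d0])
  have cd: "cyclotomic d dvd (xm1 d :: 'a poly)"
  proof -
    have "cyclotomic d dvd (\<Prod>e\<in>{e. e dvd d}. (cyclotomic e :: 'a poly))"
      by (intro dvd_prodI) (use d0 in auto)
    then show ?thesis using pd by simp
  qed
  have nz: "(cyclotomic d :: 'a poly) \<noteq> 0" using cd xm1_nz[OF d0] by auto
  have "degree (cyclotomic d :: 'a poly) = totient d" by (rule cyc_degree[OF d0])
  then have "degree (cyclotomic d :: 'a poly) \<noteq> 0" using d0 by simp
  then have nu: "\<not> is_unit (cyclotomic d :: 'a poly)" using is_unit_iff_degree[OF nz] by simp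
  obtain p :: "'a poly" where p: "prime_elem p" "p dvd cyclotomic d"
    using poly_prime_divisor[OF nz nu] by blast
  have pxd: "p dvd xm1 d" using p(2) cd dvd_trans by blast
  have "p dvd xm1 k \<longleftrightarrow> d dvd k" if k: "k > 0" for k
  proof
    assume "d dvd k"
    then have "xm1 d dvd (xm1 ((k div d) * d) :: 'a poly)" by (intro xm1_dvd_mult)
    then have "xm1 d dvd (xm1 k :: 'a poly)" using \<open>d dvd k\<close> by simp
    then show "p dvd xm1 k" using pxd dvd_trans by blast
  next
    assume pk: "p dvd xm1 k"
    have pg: "p dvd xm1 (gcd k d)" by (rule dvd_xm1_gcd[OF pk pxd])
    have g0: "gcd k d > 0" using k by simp
    have gd: "gcd k d dvd d" by simp
    show "d dvd k"
    proof (rule ccontr)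
      assume "\<not> d dvd k"
      then have "gcd k d \<noteq> d" by (metis gcd_dvd1)
      then have gl: "gcd k d < d" using gd d0 dvd_imp_le le_neq_implies_less by blast
      show False
        by (rule key_contra[OF d0 g0 gd gl pd cyc_main[OF g0] p pg])
    qed
  qed
  then show ?thesis using p pxd by blast
qed


lemma const_m1: "[:-1:] = (-1 :: 'a::field poly)"
  by (rule poly_eqI) (simp add: coeff_pCons split: nat.split)

lemma tpow_pos: "z > (0::int) \<Longrightarrow> (tpow_minus_one z :: 'a::field lpoly) = (0, xm1 (nat \<bar>z\<bar>))"
  by (simp add: tpow_minus_one_def lp_add_def lp_mon_def lp_const_def xm1_def monom_0 const_m1)

lemma tpow_neg: "z < (0::int) \<Longrightarrow> (tpow_minus_one z :: 'a::field lpoly) = (z, - xm1 (nat \<bar>z\<bar>))"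
  by (simp add: tpow_minus_one_def lp_add_def lp_mon_def lp_const_def xm1_def monom_0 const_m1)

lemma tpow_form:
  assumes "z \<noteq> 0"
  shows "\<exists>k g. tpow_minus_one z = (k, g) \<and> (g = xm1 (nat \<bar>z\<bar>) \<or> g = - (xm1 (nat \<bar>z\<bar>) :: 'a::field poly))"
proof (cases "z > 0")
  case True
  then show ?thesis using tpow_pos[OF True] by blast
next
  case False
  then have z: "z < 0" using assms by simp
  then show ?thesis using tpow_neg[OF z] by blast
qed

lemma lp_sum_norm:
  fixes xs :: "'a::field lpoly list"
  assumes "K \<le> 0" "\<forall>x\<in>set xs. K \<le> fst x"
  shows "K \<le> fst (lp_sum xs) \<and>
    monom 1 (nat (fst (lp_sum xs) - K)) * snd (lp_sum xs) = (\<Sum>x\<leftarrow>xs. monom 1 (nat (fst x - K)) * snd x)"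
  using assms(2)
proof (induction xs)
  case Nil
  then show ?case using assms(1) by (simp add: lp_sum_def)
next
  case (Cons x xs)
  obtain k g where x: "x = (k, g)" by (cases x)
  obtain j h where r: "lp_sum xs = (j, h)" by (cases "lp_sum xs")
  have IH: "K \<le> j" "monom 1 (nat (j - K)) * h = (\<Sum>x\<leftarrow>xs. monom 1 (nat (fst x - K)) * snd x)"
    using Cons r by auto
  have kK: "K \<le> k" using Cons.prems x by simp
  have s: "lp_sum (x # xs) = (min k j, monom 1 (nat (k - min k j)) * g + monom 1 (nat (j - min k j)) * h)"
    using r x by (simp add: lp_sum_def lp_add_def)
  have e1: "monom (1::'a) (nat (min k j - K)) * monom 1 (nat (k - min k j)) = monom 1 (nat (k - K))"
  proof -
    have "nat (min k j - K) + nat (k - min k j) = nat (k - K)" using kK IH(1) by linarith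
    then show ?thesis by (simp only: mult_monom mult_1)
  qed
  have e2: "monom (1::'a) (nat (min k j - K)) * monom 1 (nat (j - min k j)) = monom 1 (nat (j - K))"
  proof -
    have "nat (min k j - K) + nat (j - min k j) = nat (j - K)" using kK IH(1) by linarith
    then show ?thesis by (simp only: mult_monom mult_1)
  qed
  have "monom 1 (nat (min k j - K)) * (monom 1 (nat (k - min k j)) * g + monom 1 (nat (j - min k j)) * h)
     = (monom (1::'a) (nat (min k j - K)) * monom 1 (nat (k - min k j))) * g
       + (monom 1 (nat (min k j - K)) * monom 1 (nat (j - min k j))) * h"
    by (simp only: distrib_left mult.assoc)
  also have "\<dots> = monom 1 (nat (k - K)) * g + monom 1 (nat (j - K)) * h" by (simp only: e1 e2)
  finally show ?case using s x IH kK by simp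
qed

lemma q_at_form:
  assumes "n > 0"
  shows "\<exists>r. monom 1 r * snd (q_at n c) = (Qp n (nat \<bar>c\<bar>) :: 'a::field poly)"
proof (cases "c \<ge> 0")
  case True
  have "0 \<le> fst (q_at n c :: 'a lpoly) \<and> monom 1 (nat (fst (q_at n c :: 'a lpoly) - 0)) * snd (q_at n c :: 'a lpoly)
     = (\<Sum>x\<leftarrow>map (\<lambda>i. lp_mon (int i * c)) [0..<n]. monom 1 (nat (fst x - 0)) * snd (x :: 'a lpoly))"
    unfolding q_at_def by (rule lp_sum_norm) (use True in \<open>auto simp: lp_mon_def\<close>)
  moreover have "(\<Sum>x\<leftarrow>map (\<lambda>i. lp_mon (int i * c)) [0..<n]. monom 1 (nat (fst x - 0)) * snd (x :: 'a lpoly))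
      = (\<Sum>i\<leftarrow>[0..<n]. monom 1 (i * nat \<bar>c\<bar>))"
    using True by (simp add: lp_mon_def o_def nat_mult_distrib)
  moreover have "(\<Sum>i\<leftarrow>[0..<n]. monom 1 (i * nat \<bar>c\<bar>)) = (Qp n (nat \<bar>c\<bar>) :: 'a poly)"
    unfolding Qp_def by (simp add: sum_set_upt_conv_sum_list_nat[symmetric] atLeast0LessThan)
  ultimately show ?thesis by metis
next
  case False
  define K where "K = int (n - 1) * c"
  have K0: "K \<le> 0" using False unfolding K_def by (simp add: mult_nonneg_nonpos)
  have Kle: "K \<le> int i * c" if "i < n" for i
  proof -
    have "int i \<le> int (n - 1)" using that by simp
    then show ?thesis unfolding K_def using False by (intro mult_right_mono_neg) simp_all
  qed
  have "K \<le> fst (q_at n c :: 'a lpoly) \<and> monom 1 (nat (fst (q_at n c :: 'a lpoly) - K)) * snd (q_at n c :: 'a lpoly)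
     = (\<Sum>x\<leftarrow>map (\<lambda>i. lp_mon (int i * c)) [0..<n]. monom 1 (nat (fst x - K)) * snd (x :: 'a lpoly))"
    unfolding q_at_def by (rule lp_sum_norm[OF K0]) (use Kle in \<open>auto simp: lp_mon_def\<close>)
  moreover have "(\<Sum>x\<leftarrow>map (\<lambda>i. lp_mon (int i * c)) [0..<n]. monom 1 (nat (fst x - K)) * snd (x :: 'a lpoly))
      = (\<Sum>i<n. monom 1 (nat (int i * c - K)))"
    by (simp add: lp_mon_def o_def sum_set_upt_conv_sum_list_nat[symmetric] atLeast0LessThan)
  moreover have "(\<Sum>i<n. monom 1 (nat (int i * c - K))) = (\<Sum>i<n. (monom 1 ((n - Suc i) * nat \<bar>c\<bar>) :: 'a poly))"
  proof (rule sum.cong)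
    fix i assume "i \<in> {..<n}"
    then have i: "i < n" by simp
    have "int i * c - K = int (n - Suc i) * (- c)" unfolding K_def using i
      by (simp add: of_nat_diff algebra_simps)
    moreover have "nat (int (n - Suc i) * (- c)) = nat (int (n - Suc i)) * nat (- c)"
      by (rule nat_mult_distrib) simp
    ultimately have "nat (int i * c - K) = (n - Suc i) * nat \<bar>c\<bar>" using False
      by simp
    then show "monom 1 (nat (int i * c - K)) = (monom 1 ((n - Suc i) * nat \<bar>c\<bar>) :: 'a poly)" by simp
  qed simp
  moreover have "(\<Sum>i<n. (monom 1 ((n - Suc i) * nat \<bar>c\<bar>) :: 'a poly)) = Qp n (nat \<bar>c\<bar>)"
    unfolding Qp_def by (rule sum.nat_diff_reindex)
  ultimately show ?thesis by metis
qed


theorem lemma5p3: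
  fixes V :: "'v set" and E :: "'v set set" and lt :: "'v set \<Rightarrow> nat"
    and m :: "'v \<Rightarrow> int"
  assumes "simplicial_graph V E"
    and "graph_connected V E"
    and "\<forall>e\<in>E. lt e \<ge> 1"
    and "FC_type V E lt"
    and "chi_surjective V m"
    and "\<forall>v\<in>V. m v \<noteq> 0"
    and "d \<in> T_Gamma V E lt m"
    and "{v, w} \<in> E"
  shows "mult_cyc d
           (lp_mult (lp_mult (tpow_minus_one (m v)) (tpow_minus_one (m w)))
                    (q_at (lt {v, w}) (edge_m m {v, w})) :: 'a::field_char_0 lpoly) \<le> 2"
proof -
  have sub: "{v, w} \<subseteq> V" and c2: "card {v, w} = 2"
    using assms(1,8) unfolding simplicial_graph_def by auto
  have vw: "v \<noteq> w" using c2 by (cases "v = w") auto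
  have mv: "m v \<noteq> 0" and mw: "m w \<noteq> 0" using sub assms(6) by auto
  have d1: "d > 1" using assms(7) unfolding T_Gamma_def by auto
  then have d0: "d > 0" by simp
  define n where "n = lt {v, w}"
  have n0: "n > 0" using assms(3,8) unfolding n_def by fastforce
  have em: "edge_m m {v, w} = m v + m w" using vw by (simp add: edge_m_def)
  obtain p :: "'a poly" where pe: "prime_elem p" and pc: "p dvd cyclotomic d" and pxd: "p dvd xm1 d"
    and hx: "\<forall>k>0. p dvd xm1 k \<longleftrightarrow> d dvd k"
    using cyc_prime[OF d1] by blast
  obtain kA gA where A: "tpow_minus_one (m v) = (kA, gA)"
    and gA: "gA = xm1 (nat \<bar>m v\<bar>) \<or> gA = - (xm1 (nat \<bar>m v\<bar>) :: 'a poly)"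
    using tpow_form[OF mv] by blast
  obtain kB gB where B: "tpow_minus_one (m w) = (kB, gB)"
    and gB: "gB = xm1 (nat \<bar>m w\<bar>) \<or> gB = - (xm1 (nat \<bar>m w\<bar>) :: 'a poly)"
    using tpow_form[OF mw] by blast
  obtain kQ gQ where Q: "q_at n (m v + m w) = (kQ, gQ :: 'a poly)" by (cases "q_at n (m v + m w) :: 'a lpoly")
  have "\<exists>r. monom 1 r * snd (q_at n (m v + m w) :: 'a lpoly) = (Qp n (nat \<bar>m v + m w\<bar>) :: 'a poly)"
    by (rule q_at_form[OF n0])
  then obtain r where r: "monom 1 r * gQ = (Qp n (nat \<bar>m v + m w\<bar>) :: 'a poly)"
    using Q by auto
  define f :: "'a lpoly" where "f = (kA + kB + kQ, gA * gB * gQ)"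
  have fe: "(lp_mult (lp_mult (tpow_minus_one (m v)) (tpow_minus_one (m w)))
                    (q_at (lt {v, w}) (edge_m m {v, w})) :: 'a lpoly) = f"
    unfolding f_def em n_def[symmetric] A B Q by (simp add: lp_mult_def)
  have bound: "j \<le> 2" if "lp_dvd (0, cyclotomic d ^ j) f" for j
  proof (rule ccontr)
    assume "\<not> j \<le> 2"
    then have j3: "3 \<le> j" by simp
    from that obtain c where "lp_eq (lp_mult (0, cyclotomic d ^ j) c) f" unfolding lp_dvd_def by blast
    moreover obtain c1 h where "c = (c1, h)" by (cases c)
    ultimately obtain s1 s2 where eq: "monom 1 s1 * (cyclotomic d ^ j * h) = monom 1 s2 * (gA * gB * gQ)"
      unfolding lp_eq_def lp_mult_def f_def by auto
    have "p ^ 3 dvd cyclotomic d ^ 3" using pc by (rule dvd_power_same)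
    moreover have "cyclotomic d ^ 3 dvd (cyclotomic d ^ j :: 'a poly)" using j3 by (rule le_imp_power_dvd)
    ultimately have "p ^ 3 dvd cyclotomic d ^ j" by (rule dvd_trans)
    then have "p ^ 3 dvd monom 1 s1 * (cyclotomic d ^ j * h)" by (simp add: dvd_mult)
    then have "p ^ 3 dvd monom 1 s2 * (gA * gB * gQ)" using eq by simp
    then have "p ^ 3 dvd monom 1 r * (monom 1 s2 * (gA * gB * gQ))" by (rule dvd_mult)
    moreover have "monom 1 r * (monom 1 s2 * (gA * gB * gQ)) = monom 1 s2 * gA * gB * (monom 1 r * gQ)"
      by (simp add: algebra_simps)
    ultimately have "p ^ 3 dvd monom 1 s2 * gA * gB * Qp n (nat \<bar>m v + m w\<bar>)" using r by simp
    then have dv: "p ^ 3 dvd monom 1 s2 * xm1 (nat \<bar>m v\<bar>) * xm1 (nat \<bar>m w\<bar>) * Qp n (nat \<bar>m v + m w\<bar>)"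
      using gA gB by auto
    have ht: "\<not> p dvd monom 1 s2" by (rule prime_not_dvd_X[OF pe pxd d0])
    have "\<not> p ^ 3 dvd monom 1 s2 * xm1 (nat \<bar>m v\<bar>) * xm1 (nat \<bar>m w\<bar>) * Qp n (nat \<bar>m v + m w\<bar>)"
    proof (rule count_lemma[OF pe _ ht _ _ n0])
      show "\<And>k. 0 < k \<Longrightarrow> p dvd xm1 k = (d dvd k)" using hx by blast
      show "0 < nat \<bar>m v\<bar>" using mv by simp
      show "0 < nat \<bar>m w\<bar>" using mw by simp
      show "d dvd nat \<bar>m v + m w\<bar>" if "d dvd nat \<bar>m v\<bar>" "d dvd nat \<bar>m w\<bar>"
        using that by simp
    qed
    then show False using dv by blast
  qed
  have zero: "lp_dvd (0, cyclotomic d ^ 0) f"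
    unfolding lp_dvd_def
  proof
    show "lp_eq (lp_mult (0, cyclotomic d ^ 0) f) f"
      by (simp add: lp_eq_def lp_mult_def f_def)
  qed
  have S: "{j. lp_dvd (0, cyclotomic d ^ j) f} \<subseteq> {..2}" using bound by auto
  have fin: "finite {j. lp_dvd (0, cyclotomic d ^ j) f}" by (rule finite_subset[OF S]) simp
  have "Max {j. lp_dvd (0, cyclotomic d ^ j) f} \<le> 2"
    using fin zero bound by (subst Max_le_iff) (auto intro!: exI[of _ 0])
  then show ?thesis unfolding fe mult_cyc_def .
qed

end
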